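(* Let $\varphi:\mathbb{M}(n)\to\mathbb{C}$ be a positive unital linear functional, let $M>0$, and let $A\in\mathbb{M}(n)$ be Hermitian with $0\le A\le MI$. Then $$0\le\det\begin{pmatrix}\varphi(A)&\varphi(A^2)\\ \varphi(A^2)&\varphi(A^3)\end{pmatrix}\le\frac{M^4}{27}.$$
   Context: $\mathbb{M}(n)$ is the algebra of $n\times n$ complex matrices. A linear functional $\varphi$ on $\mathbb{M}(n)$ is positive if $\varphi(A)\ge0$ whenever $A$ is positive semidefinite, and unital if $\varphi(I)=1$. The order $0\le A\le MI$ is the Loewner order ($A$ and $MI-A$ positive semidefinite). *)

theory Defs
  imports "HOL-Analysis.Analysis" "HOL-Library.Complex_Order"
begin

text \<open>n x n complex matrices are modelled as complex^'n^'n ('n a finite index type).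
  Complex numbers carry the partial order of HOL-Library.Complex_Order:
  z \<le> w iff Re z \<le> Re w and Im z = Im w.\<close>

definition cmat_adjoint :: "complex^'n^'n \<Rightarrow> complex^'n^'n" where
  "cmat_adjoint A = (\<chi> i j. cnj (A $ j $ i))"

definition cmat_hermitian :: "complex^'n^'n \<Rightarrow> bool" where
  "cmat_hermitian A \<longleftrightarrow> cmat_adjoint A = A"

definition cmat_psd :: "complex^'n^'n \<Rightarrow> bool" where
  "cmat_psd A \<longleftrightarrow> cmat_hermitian A \<and>
     (\<forall>x :: complex^'n. 0 \<le> (\<Sum>i\<in>UNIV. cnj (x $ i) * (A *v x) $ i))"

definition cmat_scale :: "complex \<Rightarrow> complex^'n^'n \<Rightarrow> complex^'n^'n" where
  "cmat_scale c A = (\<chi> i j. c * A $ i $ j)"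

definition complex_linear_functional :: "(complex^'n^'n \<Rightarrow> complex) \<Rightarrow> bool" where
  "complex_linear_functional \<phi> \<longleftrightarrow>
     (\<forall>A B. \<phi> (A + B) = \<phi> A + \<phi> B) \<and> (\<forall>c A. \<phi> (cmat_scale c A) = c * \<phi> A)"

definition positive_functional :: "(complex^'n^'n \<Rightarrow> complex) \<Rightarrow> bool" where
  "positive_functional \<phi> \<longleftrightarrow> (\<forall>A. cmat_psd A \<longrightarrow> 0 \<le> \<phi> A)"

definition unital_functional :: "(complex^'n^'n \<Rightarrow> complex) \<Rightarrow> bool" where
  "unital_functional \<phi> \<longleftrightarrow> \<phi> (mat 1) = 1"

end

theory Submission
  imports Defs
begin


lemma mat_mul_left: "mat c ** (X::complex^'n^'n) = cmat_scale c X"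
proof -
  have "\<And>i j. (\<Sum>k\<in>UNIV. (if i = k then c else 0) * X $ k $ j) = c * X $ i $ j"
  proof -
    fix i j
    have "(\<Sum>k\<in>UNIV. (if i = k then c else 0) * X $ k $ j) = (\<Sum>k\<in>UNIV. if i = k then c * X $ k $ j else 0)"
      by (rule sum.cong) auto
    then show "(\<Sum>k\<in>UNIV. (if i = k then c else 0) * X $ k $ j) = c * X $ i $ j" by simp
  qed
  then show ?thesis by (simp add: vec_eq_iff matrix_matrix_mult_def mat_def cmat_scale_def)
qed

lemma mat_mul_right: "(X::complex^'n^'n) ** mat c = cmat_scale c X"
  by (simp add: vec_eq_iff matrix_matrix_mult_def mat_def cmat_scale_def if_distrib mult.commute cong: if_cong)

lemma mat_sub_ldistrib: "(X::complex^'n^'n) ** (Y - Z) = X ** Y - X ** Z"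
  by (simp add: vec_eq_iff matrix_matrix_mult_def left_diff_distrib right_diff_distrib sum_subtractf)

lemma mat_sub_rdistrib: "((Y::complex^'n^'n) - Z) ** X = Y ** X - Z ** X"
  by (simp add: vec_eq_iff matrix_matrix_mult_def left_diff_distrib right_diff_distrib sum_subtractf)

lemma scale_mul_left: "cmat_scale c (X::complex^'n^'n) ** Y = cmat_scale c (X ** Y)"
  by (simp add: vec_eq_iff matrix_matrix_mult_def cmat_scale_def sum_distrib_left mult.assoc)

lemma scale_mul_right: "(X::complex^'n^'n) ** cmat_scale c Y = cmat_scale c (X ** Y)"
  by (simp add: vec_eq_iff matrix_matrix_mult_def cmat_scale_def sum_distrib_left mult.left_commute)

lemma scale_scale: "cmat_scale c (cmat_scale d X) = cmat_scale (c*d) (X::complex^'n^'n)"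
  by (simp add: vec_eq_iff cmat_scale_def)

lemma scale_sub: "cmat_scale c ((X::complex^'n^'n) - Y) = cmat_scale c X - cmat_scale c Y"
  by (simp add: vec_eq_iff cmat_scale_def right_diff_distrib)

lemma adj_mul: "cmat_adjoint ((X::complex^'n^'n) ** Y) = cmat_adjoint Y ** cmat_adjoint X"
  by (simp add: vec_eq_iff matrix_matrix_mult_def cmat_adjoint_def mult.commute)

lemma adj_sub: "cmat_adjoint ((X::complex^'n^'n) - Y) = cmat_adjoint X - cmat_adjoint Y"
  by (simp add: vec_eq_iff cmat_adjoint_def)

lemma adj_mat_real: "cmat_adjoint (mat (complex_of_real t) :: complex^'n^'n) = mat (complex_of_real t)"
  by (simp add: vec_eq_iff cmat_adjoint_def mat_def)

definition qf :: "complex^'n^'n \<Rightarrow> complex^'n \<Rightarrow> complex" where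
  "qf P x = (\<Sum>i\<in>UNIV. cnj (x $ i) * (P *v x) $ i)"


lemma herm_sum:
  assumes h: "cmat_hermitian (B::complex^'n^'n)"
  shows "(\<Sum>i\<in>UNIV. cnj (x $ i) * (B *v y) $ i) = (\<Sum>j\<in>UNIV. cnj ((B *v x) $ j) * y $ j)"
proof -
  have hB: "\<And>i j. cnj (B $ j $ i) = B $ i $ j"
  proof -
    fix i j
    have "cmat_adjoint B $ i $ j = B $ i $ j" using h unfolding cmat_hermitian_def by simp
    then show "cnj (B $ j $ i) = B $ i $ j" unfolding cmat_adjoint_def by simp
  qed
  have "(\<Sum>i\<in>UNIV. cnj (x $ i) * (B *v y) $ i) = (\<Sum>i\<in>UNIV. \<Sum>j\<in>UNIV. cnj (x $ i) * B $ i $ j * y $ j)"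
    unfolding matrix_vector_mult_def by (simp add: sum_distrib_left mult.assoc)
  also have "\<dots> = (\<Sum>j\<in>UNIV. \<Sum>i\<in>UNIV. cnj (x $ i) * B $ i $ j * y $ j)"
    by (rule sum.swap)
  also have "\<dots> = (\<Sum>j\<in>UNIV. cnj ((B *v x) $ j) * y $ j)"
  proof (rule sum.cong[OF refl])
    fix j
    have "cnj ((B *v x) $ j) = (\<Sum>i\<in>UNIV. cnj (B $ j $ i) * cnj (x $ i))"
      unfolding matrix_vector_mult_def by simp
    also have "\<dots> = (\<Sum>i\<in>UNIV. cnj (x $ i) * B $ i $ j)"
      by (rule sum.cong[OF refl]) (simp only: hB mult.commute)
    finally show "(\<Sum>i\<in>UNIV. cnj (x $ i) * B $ i $ j * y $ j) = cnj ((B *v x) $ j) * y $ j"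
      by (simp add: sum_distrib_right)
  qed
  finally show ?thesis .
qed

lemma qf_herm: "cmat_hermitian B \<Longrightarrow> qf (B ** P ** B) x = qf P (B *v x)"
proof -
  assume h: "cmat_hermitian B"
  have "(B ** P ** B) *v x = B *v (P *v (B *v x))" by (simp add: matrix_vector_mul_assoc matrix_mul_assoc)
  then show ?thesis unfolding qf_def using herm_sum[OF h] by simp
qed

lemma psd_sandwich:
  assumes "cmat_psd P" "cmat_hermitian B"
  shows "cmat_psd (B ** P ** B)"
proof -
  have "cmat_hermitian (B ** P ** B)"
    using assms unfolding cmat_psd_def cmat_hermitian_def by (simp add: adj_mul matrix_mul_assoc)
  moreover have "\<forall>x. 0 \<le> qf (B ** P ** B) x"
  proof
    fix x
    have "qf (B ** P ** B) x = qf P (B *v x)" using assms(2) by (rule qf_herm)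
    moreover have "0 \<le> qf P (B *v x)" using assms(1) unfolding cmat_psd_def qf_def by blast
    ultimately show "0 \<le> qf (B ** P ** B) x" by simp
  qed
  ultimately show ?thesis unfolding cmat_psd_def qf_def by simp
qed

lemma psd_id: "cmat_psd (mat 1 :: complex^'n^'n)"
  unfolding cmat_psd_def cmat_hermitian_def
proof
  show "cmat_adjoint (mat 1 :: complex^'n^'n) = mat 1" by (simp add: vec_eq_iff cmat_adjoint_def mat_def)
  show "\<forall>x::complex^'n. 0 \<le> (\<Sum>i\<in>UNIV. cnj (x $ i) * (mat 1 *v x) $ i)"
  proof
    fix x :: "complex^'n"
    have "\<And>i. 0 \<le> cnj (x $ i) * x $ i"
    proof -
      fix i
      have "cnj (x $ i) * x $ i = complex_of_real ((Re (x $ i))\<^sup>2 + (Im (x $ i))\<^sup>2)"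
        using complex_mult_cnj[of "x $ i"] by (simp only: mult.commute)
      then show "0 \<le> cnj (x $ i) * x $ i" by (simp add: less_eq_complex_def)
    qed
    then show "0 \<le> (\<Sum>i\<in>UNIV. cnj (x $ i) * (mat 1 *v x) $ i)" by (simp add: sum_nonneg)
  qed
qed

lemma forall_lin_zero:
  fixes p q :: real
  assumes "\<forall>t. 0 \<le> p - 2*t*q" shows "q = 0"
proof (rule ccontr)
  assume "q \<noteq> 0"
  then have "0 \<le> p - 2*((p+1)/(2*q))*q" using assms by blast
  also have "\<dots> = -1" using \<open>q \<noteq> 0\<close> by (simp add: field_simps)
  finally show False by simp
qed

lemma real_part:
  fixes a b c M :: real
  assumes M: "M > 0" and a0: "0 \<le> a" and aM: "a \<le> M"
    and F1: "\<forall>t. 0 \<le> c - 2*t*b + t*t*a"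
    and F2: "\<forall>u. 0 \<le> M*(b - 2*u*a + u*u) - (c - 2*u*b + u*u*a)"
  shows "0 \<le> a*c - b*b \<and> a*c - b*b \<le> M^4/27"
proof
  show "0 \<le> a*c - b*b"
  proof (cases "a = 0")
    case True
    then have "\<forall>t. 0 \<le> c - 2*t*b" using F1 by simp
    then have "b = 0" by (rule forall_lin_zero)
    then show ?thesis using True by simp
  next
    case False
    then have ap: "a > 0" using a0 by simp
    have "0 \<le> c - 2*(b/a)*b + (b/a)*(b/a)*a" using F1 by blast
    also have "\<dots> = (a*c - b*b)/a" using ap by (simp add: field_simps power2_eq_square)
    finally show ?thesis using ap by (simp add: zero_le_divide_iff)
  qed
next
  show "a*c - b*b \<le> M^4/27"
  proof (cases "a = M")
    case True
    then have "\<forall>u. 0 \<le> (M*b - c) - 2*u*(M*M - b)" using F2 by (simp add: algebra_simps)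
    then have "M*M - b = 0" by (rule forall_lin_zero)
    moreover have "0 \<le> M*b - c" using F2[rule_format, of 0] by simp
    ultimately have cb: "c \<le> M*(M*M)" and bb: "b = M*M" by simp_all
    have "M*c \<le> M*(M*(M*M))" using cb M by simp
    then have "a*c - b*b \<le> 0" using True bb by (simp add: algebra_simps)
    moreover have "0 \<le> M^4/27" using M by simp
    ultimately show ?thesis by linarith
  next
    case False
    then have d: "M - a > 0" using aM by simp
    define u where "u = (M*a - b)/(M-a)"
    have "0 \<le> (M-a) * (M*(b - 2*u*a + u*u) - (c - 2*u*b + u*u*a))"
      using F2 d by simp
    also have "\<dots> = (M-a)*(M*b - c) + (u*(M-a))^2 - 2*(u*(M-a))*(M*a-b)"
      by (simp add: algebra_simps power2_eq_square)
    also have "u*(M-a) = M*a - b" using d unfolding u_def by simp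
    also have "(M-a)*(M*b - c) + (M*a - b)^2 - 2*(M*a - b)*(M*a-b) = (M-a)*(M*b - c) - (M*a-b)^2"
      by (simp add: power2_eq_square)
    finally have k: "(M*a-b)^2 \<le> (M-a)*(M*b - c)" by simp
    have "a*(M*a-b)^2 \<le> a*((M-a)*(M*b - c))" using k a0 by (rule mult_left_mono)
    then have "(a*c - b*b)*(M-a) \<le> M*((M*a-b)*(b-a*a))"
      by (simp add: algebra_simps power2_eq_square)
    also have "(M*a-b)*(b-a*a) \<le> (a*(M-a))^2/4"
    proof -
      have "0 \<le> ((M*a-b) - (b-a*a))^2" by simp
      then show ?thesis by (simp add: algebra_simps power2_eq_square)
    qed
    then have "M*((M*a-b)*(b-a*a)) \<le> M*((a*(M-a))^2/4)" using M by (intro mult_left_mono) auto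
    finally have "(a*c - b*b)*(M-a) \<le> (M*a*a*(M-a)/4)*(M-a)"
      by (simp add: power2_eq_square algebra_simps)
    then have "a*c - b*b \<le> M*a*a*(M-a)/4" using d by simp
    also have "\<dots> \<le> M^4/27"
    proof -
      have "0 \<le> (2*M-3*a)^2*(M+3*a)" using M a0 by simp
      then have "0 \<le> 4*M^3 - 27*M*a*a + 27*a*a*a" by (simp add: algebra_simps power2_eq_square power3_eq_cube)
      then have "0 \<le> M*(4*M^3 - 27*M*a*a + 27*a*a*a)" using M by simp
      then show ?thesis by (simp add: algebra_simps power2_eq_square power3_eq_cube power4_eq_xxxx)
    qed
    finally show ?thesis .
  qed
qed

lemma phi_diff:
  assumes "complex_linear_functional \<phi>"
  shows "\<phi> (X - Y) = \<phi> X - \<phi> (Y::complex^'n^'n)"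
proof -
  have "\<phi> (X - Y + Y) = \<phi> (X - Y) + \<phi> Y" using assms unfolding complex_linear_functional_def by blast
  then show ?thesis by simp
qed

lemma det2_sym: "det (vector [vector [p, q], vector [q, r]] :: complex^2^2) = p*r - q*q"
  unfolding det_2 by (simp add: vector_1 vector_2)

lemma phi_scale:
  assumes "complex_linear_functional \<phi>"
  shows "\<phi> (cmat_scale c X) = c * \<phi> (X::complex^'n^'n)"
  using assms unfolding complex_linear_functional_def by blast

lemma phi_mat:
  assumes "complex_linear_functional \<phi>" "unital_functional \<phi>"
  shows "\<phi> (mat c :: complex^'n^'n) = c"
proof -
  have "mat c = cmat_scale c (mat 1 :: complex^'n^'n)"
    by (simp add: vec_eq_iff cmat_scale_def mat_def)
  then show ?thesis using phi_scale[OF assms(1)] assms(2) unfolding unital_functional_def by simp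
qed

lemma psd_real:
  assumes "positive_functional \<phi>" "cmat_psd P"
  shows "\<phi> P = complex_of_real (Re (\<phi> P)) \<and> 0 \<le> Re (\<phi> P)"
proof -
  have "0 \<le> \<phi> P" using assms unfolding positive_functional_def by blast
  then show ?thesis by (simp add: less_eq_complex_def complex_eq_iff)
qed

lemma herm_shift:
  assumes "cmat_hermitian (A::complex^'n^'n)"
  shows "cmat_hermitian (A - mat (complex_of_real t))"
  using assms unfolding cmat_hermitian_def by (simp add: adj_sub adj_mat_real)

theorem theorem3p2:
  fixes \<phi> :: "complex^'n^'n \<Rightarrow> complex" and A :: "complex^'n^'n" and M :: real
  assumes "complex_linear_functional \<phi>" and "positive_functional \<phi>" and "unital_functional \<phi>"
    and "M > 0"
    and "cmat_hermitian A" and "cmat_psd A" and "cmat_psd (mat (complex_of_real M) - A)"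
  shows "0 \<le> det (vector [vector [\<phi> A, \<phi> (A ** A)],
                          vector [\<phi> (A ** A), \<phi> (A ** A ** A)]] :: complex^2^2)
    \<and> det (vector [vector [\<phi> A, \<phi> (A ** A)],
                   vector [\<phi> (A ** A), \<phi> (A ** A ** A)]] :: complex^2^2)
        \<le> complex_of_real (M ^ 4 / 27)"
proof -
  note lin = assms(1) and pos = assms(2) and hA = assms(5) and pA = assms(6) and pMA = assms(7)
  have p2: "cmat_psd (A ** A)"
    using psd_sandwich[OF psd_id hA] by simp
  have p3: "cmat_psd (A ** A ** A)"
    using psd_sandwich[OF pA hA] .
  define a where "a = Re (\<phi> A)"
  define b where "b = Re (\<phi> (A ** A))"
  define c where "c = Re (\<phi> (A ** A ** A))"
  have ea: "\<phi> A = complex_of_real a" unfolding a_def using psd_real[OF pos pA] by (rule conjunct1)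
  have a0: "0 \<le> a" unfolding a_def using psd_real[OF pos pA] by (rule conjunct2)
  have eb: "\<phi> (A ** A) = complex_of_real b" unfolding b_def using psd_real[OF pos p2] by (rule conjunct1)
  have ec: "\<phi> (A ** A ** A) = complex_of_real c" unfolding c_def using psd_real[OF pos p3] by (rule conjunct1)
  have phiI: "\<phi> (mat 1) = 1" using assms(3) unfolding unital_functional_def .
  have matM: "mat (complex_of_real M) = cmat_scale (complex_of_real M) (mat 1 :: complex^'n^'n)"
    by (simp add: vec_eq_iff cmat_scale_def mat_def)
  have phiM: "\<phi> (mat (complex_of_real M)) = complex_of_real M"
    using phi_scale[OF lin] phiI matM by simp
  have aM: "a \<le> M"
  proof -
    have "0 \<le> \<phi> (mat (complex_of_real M) - A)" using pos pMA unfolding positive_functional_def by blast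
    then have "0 \<le> complex_of_real (M - a)" by (simp add: phi_diff[OF lin] phiM ea)
    then show ?thesis by (simp add: less_eq_complex_def)
  qed
  note expand = mat_sub_ldistrib mat_sub_rdistrib mat_mul_left mat_mul_right scale_mul_left
          scale_mul_right scale_scale scale_sub phi_diff[OF lin] phi_scale[OF lin] ea eb ec phiI phi_mat[OF lin assms(3)]
  have F1: "\<forall>t. 0 \<le> c - 2*t*b + t*t*a"
  proof
    fix t :: real
    let ?B = "A - mat (complex_of_real t)"
    have "cmat_psd (?B ** A ** ?B)" by (rule psd_sandwich[OF pA herm_shift[OF hA]])
    then have "0 \<le> \<phi> (?B ** A ** ?B)" using pos unfolding positive_functional_def by blast
    also have "\<phi> (?B ** A ** ?B) = complex_of_real (c - 2*t*b + t*t*a)"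
      by (simp only: expand) (simp add: algebra_simps)
    finally show "0 \<le> c - 2*t*b + t*t*a" by (simp add: less_eq_complex_def)
  qed
  have F2: "\<forall>u. 0 \<le> M*(b - 2*u*a + u*u) - (c - 2*u*b + u*u*a)"
  proof
    fix t :: real
    let ?B = "A - mat (complex_of_real t)"
    let ?m = "complex_of_real M"
    have "cmat_psd (?B ** (mat ?m - A) ** ?B)" by (rule psd_sandwich[OF pMA herm_shift[OF hA]])
    then have "0 \<le> \<phi> (?B ** (mat ?m - A) ** ?B)" using pos unfolding positive_functional_def by blast
    also have "\<phi> (?B ** (mat ?m - A) ** ?B) = complex_of_real (M*(b - 2*t*a + t*t) - (c - 2*t*b + t*t*a))"
      by (simp only: expand) (simp add: algebra_simps)
    finally show "0 \<le> M*(b - 2*t*a + t*t) - (c - 2*t*b + t*t*a)" by (simp add: less_eq_complex_def)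
  qed
  have R: "0 \<le> a*c - b*b \<and> a*c - b*b \<le> M^4/27"
    by (rule real_part[OF assms(4) a0 aM F1 F2])
  have D: "det (vector [vector [\<phi> A, \<phi> (A ** A)],
                   vector [\<phi> (A ** A), \<phi> (A ** A ** A)]] :: complex^2^2) = complex_of_real (a*c - b*b)"
    unfolding ea eb ec det2_sym by simp
  show ?thesis unfolding D using R by (simp add: less_eq_complex_def)
qed

end
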